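(* Let $\Omega \subset \mathbb{R}^2$ be a bounded, open, connected set, $f:\Omega\to[0,1]$ a given image, ${\cal A}$ a linear operator, $\mu>0$, $\lambda>0$, $K\ge 1$, and consider, for $g\in L^2(\Omega)$, constants $c_1,\dots,c_K\in\mathbb{R}$ and functions $u_1,\dots,u_K$ on $\Omega$, the energy \[ E(u_i, c_i, g) = \mu\, \Phi(f, {\cal A}g) + \lambda \sum_{i=1}^K \int_{\Omega}(g-c_i)^2 u_i\,dx + \sum_{i=1}^K \int_{\Omega} |\nabla u_i|\, dx, \] subject to $\sum_{i=1}^K u_i(x) = 1$ and $u_i(x)\in\{0,1\}$ for all $x\in\Omega$. Assume the data fidelity term $\Phi(f, {\cal A}g)$ is convex and continuous in $g$. Then for fixed $c_i$ and $u_i$ there exists one and only one $g\in L^2(\Omega)$ which minimizes $E(u_i, c_i, g)$.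
   Context: Image segmentation model coupling a restoration data fidelity term $\Phi(f,{\cal A}g)$ (e.g. $\int_\Omega (f-{\cal A}g)^2dx$ for Gaussian noise, $\int_\Omega({\cal A}g - f\log({\cal A}g))dx$ for Poisson noise, $\int_\Omega|f-{\cal A}g|dx$ for impulsive noise) with the piecewise constant Mumford-Shah segmentation fidelity $\sum_i\int_\Omega (g-c_i)^2u_i\,dx$ and total variation regularization of the indicator functions $u_i$; ${\cal A}$ is a problem-related linear operator (identity or blurring operator). *)

theory Defs
  imports "HOL-Analysis.Analysis"
begin

type_synonym R2 = "real ^ 2"

text \<open>Square-integrable functions on \<Omega> (representatives; equality in L2 is a.e. equality).\<close>
definition L2 :: "R2 set \<Rightarrow> (R2 \<Rightarrow> real) set" where
  "L2 \<Omega> = {g. g \<in> borel_measurable (lebesgue_on \<Omega>) \<and>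
                 integrable (lebesgue_on \<Omega>) (\<lambda>x. (g x)\<^sup>2)}"

definition L2_dist_sq :: "R2 set \<Rightarrow> (R2 \<Rightarrow> real) \<Rightarrow> (R2 \<Rightarrow> real) \<Rightarrow> real" where
  "L2_dist_sq \<Omega> g h = (\<integral>x. (g x - h x)\<^sup>2 \<partial>lebesgue_on \<Omega>)"

definition convex_on_L2 :: "R2 set \<Rightarrow> ((R2 \<Rightarrow> real) \<Rightarrow> real) \<Rightarrow> bool" where
  "convex_on_L2 \<Omega> F \<longleftrightarrow>
     (\<forall>g\<in>L2 \<Omega>. \<forall>h\<in>L2 \<Omega>. \<forall>t::real. 0 \<le> t \<and> t \<le> 1 \<longrightarrow>
        F (\<lambda>x. t * g x + (1 - t) * h x) \<le> t * F g + (1 - t) * F h)"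

text \<open>Continuity of a functional w.r.t. the L2(\<Omega>) norm (sequential, equivalent in a metric space).\<close>
definition continuous_on_L2 :: "R2 set \<Rightarrow> ((R2 \<Rightarrow> real) \<Rightarrow> real) \<Rightarrow> bool" where
  "continuous_on_L2 \<Omega> F \<longleftrightarrow>
     (\<forall>g\<in>L2 \<Omega>. \<forall>gs. (\<forall>n. gs n \<in> L2 \<Omega>) \<longrightarrow>
        (\<lambda>n. L2_dist_sq \<Omega> (gs n) g) \<longlonglongrightarrow> 0 \<longrightarrow> (\<lambda>n. F (gs n)) \<longlonglongrightarrow> F g)"

definition linear_on_L2 :: "R2 set \<Rightarrow> ((R2 \<Rightarrow> real) \<Rightarrow> (R2 \<Rightarrow> real)) \<Rightarrow> bool" where
  "linear_on_L2 \<Omega> A \<longleftrightarrow>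
     (\<forall>g\<in>L2 \<Omega>. \<forall>h\<in>L2 \<Omega>. \<forall>a b::real.
        A (\<lambda>x. a * g x + b * h x) = (\<lambda>x. a * A g x + b * A h x))"

definition div_field :: "(R2 \<Rightarrow> R2 \<Rightarrow> R2) \<Rightarrow> R2 \<Rightarrow> real" where
  "div_field D x = (\<Sum>i\<in>Basis. D x i \<bullet> i)"

text \<open>Admissible test fields: C^1, compactly supported in \<Omega>, pointwise norm at most 1.
  (phi, D) where D is the (continuous) derivative of phi.\<close>
definition test_fields :: "R2 set \<Rightarrow> ((R2 \<Rightarrow> R2) \<times> (R2 \<Rightarrow> R2 \<Rightarrow> R2)) set" where
  "test_fields \<Omega> = {(\<phi>, D). (\<forall>x. (\<phi> has_derivative D x) (at x)) \<and>
                       (\<forall>v. continuous_on UNIV (\<lambda>x. D x v)) \<and>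
                       (\<exists>K. compact K \<and> K \<subseteq> \<Omega> \<and> (\<forall>x. x \<notin> K \<longrightarrow> \<phi> x = 0)) \<and>
                       (\<forall>x. norm (\<phi> x) \<le> 1)}"

text \<open>Total variation \<integral>_\<Omega> |\<nabla>u| (distributional, dual formulation).\<close>
definition TV :: "R2 set \<Rightarrow> (R2 \<Rightarrow> real) \<Rightarrow> ereal" where
  "TV \<Omega> u = (SUP p \<in> test_fields \<Omega>.
               ereal (\<integral>x. u x * div_field (snd p) x \<partial>lebesgue_on \<Omega>))"

definition energy ::
  "R2 set \<Rightarrow> real \<Rightarrow> real \<Rightarrow> nat \<Rightarrow> ((R2 \<Rightarrow> real) \<Rightarrow> (R2 \<Rightarrow> real) \<Rightarrow> real) \<Rightarrow>
   (R2 \<Rightarrow> real) \<Rightarrow> ((R2 \<Rightarrow> real) \<Rightarrow> (R2 \<Rightarrow> real)) \<Rightarrow>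
   (nat \<Rightarrow> R2 \<Rightarrow> real) \<Rightarrow> (nat \<Rightarrow> real) \<Rightarrow> (R2 \<Rightarrow> real) \<Rightarrow> ereal" where
  "energy \<Omega> \<mu> lam K \<Phi> f A u c g =
     ereal (\<mu> * \<Phi> f (A g)
            + lam * (\<Sum>i=1..K. \<integral>x. (g x - c i)\<^sup>2 * u i x \<partial>lebesgue_on \<Omega>))
     + (\<Sum>i=1..K. TV \<Omega> (u i))"

end

theory Submission
  imports Defs
begin

definition SQ :: "'a measure \<Rightarrow> ('a \<Rightarrow> real) set" where
  "SQ M = {g. g \<in> borel_measurable M \<and> integrable M (\<lambda>x. (g x)\<^sup>2)}"

context finite_measure begin

lemma sq_int_prod:
  fixes g h :: "'a \<Rightarrow> real"
  assumes [measurable]: "g \<in> borel_measurable M" "h \<in> borel_measurable M"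
    and "integrable M (\<lambda>x. (g x)\<^sup>2)" "integrable M (\<lambda>x. (h x)\<^sup>2)"
  shows "integrable M (\<lambda>x. g x * h x)"
proof (rule Bochner_Integration.integrable_bound[of _ "\<lambda>x. (g x)\<^sup>2 + (h x)\<^sup>2"])
  show "integrable M (\<lambda>x. (g x)\<^sup>2 + (h x)\<^sup>2)" using assms by auto
  show "AE x in M. norm (g x * h x) \<le> norm ((g x)\<^sup>2 + (h x)\<^sup>2)"
  proof (rule AE_I2)
    fix x
    have "2*\<bar>g x\<bar>*\<bar>h x\<bar> \<le> \<bar>g x\<bar>\<^sup>2 + \<bar>h x\<bar>\<^sup>2" by (rule sum_squares_bound)
    moreover have "0 \<le> \<bar>g x\<bar>*\<bar>h x\<bar>" by simp
    moreover have "\<bar>g x\<bar>\<^sup>2 = (g x)\<^sup>2" "\<bar>h x\<bar>\<^sup>2 = (h x)\<^sup>2" by simp_all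
    ultimately have "\<bar>g x * h x\<bar> \<le> (g x)\<^sup>2 + (h x)\<^sup>2" by (simp only: abs_mult; linarith)
    then show "norm (g x * h x) \<le> norm ((g x)\<^sup>2 + (h x)\<^sup>2)" by simp
  qed
qed simp

lemma sq_int_lin:
  fixes g h :: "'a \<Rightarrow> real"
  assumes [measurable]: "g \<in> borel_measurable M" "h \<in> borel_measurable M"
    and "integrable M (\<lambda>x. (g x)\<^sup>2)" "integrable M (\<lambda>x. (h x)\<^sup>2)"
  shows "integrable M (\<lambda>x. (a * g x + b * h x)\<^sup>2)"
proof -
  have "integrable M (\<lambda>x. a\<^sup>2 * (g x)\<^sup>2 + 2*a*b * (g x * h x) + b\<^sup>2 * (h x)\<^sup>2)"
    using assms sq_int_prod[OF assms] by auto
  moreover have "(\<lambda>x. a\<^sup>2 * (g x)\<^sup>2 + 2*a*b * (g x * h x) + b\<^sup>2 * (h x)\<^sup>2) = (\<lambda>x. (a * g x + b * h x)\<^sup>2)"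
    by (auto simp: power2_eq_square algebra_simps)
  ultimately show ?thesis by simp
qed

lemma sq_int_const: "integrable M (\<lambda>x. (c::real)\<^sup>2)"
  by simp

lemma sq_int_L1:
  fixes g :: "'a \<Rightarrow> real"
  assumes [measurable]: "g \<in> borel_measurable M" and "integrable M (\<lambda>x. (g x)\<^sup>2)"
  shows "integrable M g"
proof (rule Bochner_Integration.integrable_bound[of _ "\<lambda>x. (g x)\<^sup>2 + 1"])
  show "integrable M (\<lambda>x. (g x)\<^sup>2 + 1)" using assms by auto
  show "AE x in M. norm (g x) \<le> norm ((g x)\<^sup>2 + 1)"
  proof (rule AE_I2)
    fix x
    have "2*\<bar>g x\<bar>*1 \<le> \<bar>g x\<bar>\<^sup>2 + 1\<^sup>2" by (rule sum_squares_bound)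
    then have "\<bar>g x\<bar> \<le> (g x)\<^sup>2 + 1" by simp
    then show "norm (g x) \<le> norm ((g x)\<^sup>2 + 1)" by simp
  qed
qed simp

lemma SQ_lin:
  assumes "g \<in> SQ M" "h \<in> SQ M"
  shows "(\<lambda>x. a * g x + b * h x) \<in> SQ M"
proof -
  have [measurable]: "g \<in> borel_measurable M" "h \<in> borel_measurable M"
    and i: "integrable M (\<lambda>x. (g x)\<^sup>2)" "integrable M (\<lambda>x. (h x)\<^sup>2)"
    using assms by (simp_all add: SQ_def)
  have "(\<lambda>x. a * g x + b * h x) \<in> borel_measurable M" by measurable
  moreover have "integrable M (\<lambda>x. (a * g x + b * h x)\<^sup>2)"
    by (rule sq_int_lin) (simp_all add: i)
  ultimately show ?thesis by (simp add: SQ_def)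
qed

lemma SQ_const: "(\<lambda>x. c) \<in> SQ M"
  by (auto simp: SQ_def)

lemma SQ_diff:
  assumes "g \<in> SQ M" "h \<in> SQ M"
  shows "(\<lambda>x. g x - h x) \<in> SQ M"
  using SQ_lin[OF assms, of 1 "-1"] by simp

lemma SQ_diff_int:
  assumes "g \<in> SQ M" "h \<in> SQ M"
  shows "integrable M (\<lambda>x. (g x - h x)\<^sup>2)"
  using SQ_diff[OF assms] by (simp add: SQ_def)

lemma SQ_int:
  assumes "g \<in> SQ M"
  shows "integrable M g"
proof -
  have [measurable]: "g \<in> borel_measurable M" and "integrable M (\<lambda>x. (g x)\<^sup>2)"
    using assms by (simp_all add: SQ_def)
  then show ?thesis by (rule sq_int_L1)
qed

lemma fatou_real:
  fixes f :: "nat \<Rightarrow> 'a \<Rightarrow> real"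
  assumes [measurable]: "\<And>n. f n \<in> borel_measurable M" "F \<in> borel_measurable M"
    and nn: "\<And>n x. 0 \<le> f n x"
    and lim: "AE x in M. (\<lambda>n. f n x) \<longlonglongrightarrow> F x"
    and int: "\<And>n. integrable M (f n)"
    and bd: "eventually (\<lambda>n. integral\<^sup>L M (f n) \<le> B) sequentially"
  shows "integrable M F \<and> integral\<^sup>L M F \<le> B"
proof -
  have Fnn: "AE x in M. 0 \<le> F x"
    using lim
  proof eventually_elim
    case (elim x)
    show ?case by (rule LIMSEQ_le_const[OF elim]) (simp add: nn)
  qed
  obtain N where N: "\<And>n. n \<ge> N \<Longrightarrow> integral\<^sup>L M (f n) \<le> B"
    using bd by (auto simp: eventually_sequentially)
  have "0 \<le> integral\<^sup>L M (f N)" by (simp add: nn)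
  then have B0: "0 \<le> B" using N[of N] by linarith
  have "(\<integral>\<^sup>+x. ennreal (F x) \<partial>M) = (\<integral>\<^sup>+x. liminf (\<lambda>n. ennreal (f n x)) \<partial>M)"
  proof (rule nn_integral_cong_AE)
    show "AE x in M. ennreal (F x) = liminf (\<lambda>n. ennreal (f n x))"
      using lim
    proof eventually_elim
      case (elim x)
      then have "(\<lambda>n. ennreal (f n x)) \<longlonglongrightarrow> ennreal (F x)"
        by (rule tendsto_ennrealI)
      then show ?case by (simp add: lim_imp_Liminf)
    qed
  qed
  also have "\<dots> \<le> liminf (\<lambda>n. \<integral>\<^sup>+x. ennreal (f n x) \<partial>M)"
    by (rule nn_integral_liminf) measurable
  also have "\<dots> = liminf (\<lambda>n. ennreal (integral\<^sup>L M (f n)))"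
  proof -
    have "\<And>n. (\<integral>\<^sup>+x. ennreal (f n x) \<partial>M) = ennreal (integral\<^sup>L M (f n))"
      by (rule nn_integral_eq_integral[OF int]) (simp add: nn)
    then show ?thesis by simp
  qed
  also have "\<dots> \<le> limsup (\<lambda>n. ennreal (integral\<^sup>L M (f n)))"
    by (rule Liminf_le_Limsup) simp
  also have "\<dots> \<le> ennreal B"
  proof -
    have ev: "eventually (\<lambda>n. ennreal (integral\<^sup>L M (f n)) \<le> ennreal B) sequentially"
      using bd by (rule eventually_mono) (rule ennreal_leI)
    show ?thesis by (rule Limsup_bounded[OF ev])
  qed
  finally have le: "(\<integral>\<^sup>+x. ennreal (F x) \<partial>M) \<le> ennreal B" .
  have fin: "(\<integral>\<^sup>+x. ennreal (F x) \<partial>M) < \<infinity>"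
    unfolding infinity_ennreal_def by (rule le_less_trans[OF le ennreal_less_top])
  have "integrable M F"
    using _ Fnn fin by (rule integrableI_nonneg) simp
  moreover have "integral\<^sup>L M F \<le> B"
  proof -
    have "integral\<^sup>L M F = enn2real (\<integral>\<^sup>+x. ennreal (F x) \<partial>M)"
      using _ Fnn by (rule integral_eq_nn_integral) simp
    also have "\<dots> \<le> enn2real (ennreal B)"
      by (rule enn2real_mono[OF le]) simp
    also have "\<dots> = B" using B0 by simp
    finally show ?thesis .
  qed
  ultimately show ?thesis by blast
qed

lemma SQ_complete:
  assumes s: "\<And>n. s n \<in> SQ M"
    and C: "\<And>e. e > 0 \<Longrightarrow> \<exists>N. \<forall>i\<ge>N. \<forall>j\<ge>N. (\<integral>x. (s i x - s j x)\<^sup>2 \<partial>M) < e"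
  shows "\<exists>g\<in>SQ M. \<exists>r. strict_mono r \<and> (AE x in M. (\<lambda>n. s (r n) x) \<longlonglongrightarrow> g x)
           \<and> (\<lambda>n. \<integral>x. (s n x - g x)\<^sup>2 \<partial>M) \<longlonglongrightarrow> 0"
proof -
  have [measurable]: "\<And>n. s n \<in> borel_measurable M" using s by (simp add: SQ_def)
  have intd: "\<And>i j. integrable M (\<lambda>x. (s i x - s j x)\<^sup>2)" using SQ_diff_int[OF s s] .
  define mu where "mu = measure M (space M)"
  have mu0: "0 \<le> mu" by (simp add: mu_def)
  have L1C: "\<exists>N. \<forall>i\<ge>N. \<forall>j\<ge>N. (LINT x|M. norm (s i x - s j x)) < e" if e: "e > 0" for e
  proof -
    define \<epsilon> where "\<epsilon> = e / (mu + 1)"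
    have \<epsilon>0: "\<epsilon> > 0" using e mu0 by (simp add: \<epsilon>_def)
    obtain N where N: "\<forall>i\<ge>N. \<forall>j\<ge>N. (\<integral>x. (s i x - s j x)\<^sup>2 \<partial>M) < e * \<epsilon>"
      using C[of "e*\<epsilon>"] e \<epsilon>0 by auto
    have "(LINT x|M. norm (s i x - s j x)) < e" if ij: "i \<ge> N" "j \<ge> N" for i j
    proof -
      have "(LINT x|M. norm (s i x - s j x)) \<le> (\<integral>x. (s i x - s j x)\<^sup>2 / (2*\<epsilon>) + \<epsilon>/2 \<partial>M)"
      proof (rule integral_mono)
        show "integrable M (\<lambda>x. norm (s i x - s j x))"
          using SQ_int[OF SQ_diff[OF s s]] by (rule integrable_norm)
        show "integrable M (\<lambda>x. (s i x - s j x)\<^sup>2 / (2*\<epsilon>) + \<epsilon>/2)" using intd by simp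
        fix x
        have "2 * \<bar>s i x - s j x\<bar> * \<epsilon> \<le> \<bar>s i x - s j x\<bar>\<^sup>2 + \<epsilon>\<^sup>2" by (rule sum_squares_bound)
        then show "norm (s i x - s j x) \<le> (s i x - s j x)\<^sup>2 / (2*\<epsilon>) + \<epsilon>/2"
          using \<epsilon>0 by (simp add: field_simps power2_eq_square)
      qed
      also have "\<dots> = (\<integral>x. (s i x - s j x)\<^sup>2 \<partial>M) / (2*\<epsilon>) + \<epsilon>/2 * mu"
        using intd by (simp add: mu_def)
      also have "\<dots> < e"
      proof -
        have "(\<integral>x. (s i x - s j x)\<^sup>2 \<partial>M) < e * \<epsilon>" using N ij by blast
        then have "(\<integral>x. (s i x - s j x)\<^sup>2 \<partial>M) / (2*\<epsilon>) < e/2"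
          using \<epsilon>0 by (simp add: field_simps)
        moreover have "\<epsilon> * mu < e" using e mu0 by (simp add: \<epsilon>_def field_simps)
        ultimately show ?thesis by linarith
      qed
      finally show ?thesis .
    qed
    then show ?thesis by blast
  qed
  obtain r where r: "strict_mono r" and ae: "AE x in M. Cauchy (\<lambda>i. s (r i) x)"
    using cauchy_L1_AE_cauchy_subseq[OF SQ_int[OF s] L1C] by blast
  define g where "g x = lim (\<lambda>i. s (r i) x)" for x
  have gm[measurable]: "g \<in> borel_measurable M" unfolding g_def by measurable
  have ae_lim: "AE x in M. (\<lambda>n. s (r n) x) \<longlonglongrightarrow> g x"
    using ae
  proof eventually_elim
    case (elim x)
    then show ?case by (simp add: g_def Cauchy_convergent_iff convergent_LIMSEQ_iff)
  qed
  have key: "integrable M (\<lambda>x. (g x - s k x)\<^sup>2) \<and> (\<integral>x. (g x - s k x)\<^sup>2 \<partial>M) \<le> e"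
    if eN: "\<forall>i\<ge>N. \<forall>j\<ge>N. (\<integral>x. (s i x - s j x)\<^sup>2 \<partial>M) < e" and k: "k \<ge> N" for e N k
  proof (rule fatou_real[where f = "\<lambda>n x. (s (r n) x - s k x)\<^sup>2"])
    show "\<And>n. (\<lambda>x. (s (r n) x - s k x)\<^sup>2) \<in> borel_measurable M" by measurable
    show "(\<lambda>x. (g x - s k x)\<^sup>2) \<in> borel_measurable M" by measurable
    show "\<And>n x. 0 \<le> (s (r n) x - s k x)\<^sup>2" by simp
    show "AE x in M. (\<lambda>n. (s (r n) x - s k x)\<^sup>2) \<longlonglongrightarrow> (g x - s k x)\<^sup>2"
      using ae_lim
    proof eventually_elim
      case (elim x)
      then show ?case by (intro tendsto_intros)
    qed
    show "\<And>n. integrable M (\<lambda>x. (s (r n) x - s k x)\<^sup>2)" by (rule intd)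
    show "eventually (\<lambda>n. integral\<^sup>L M (\<lambda>x. (s (r n) x - s k x)\<^sup>2) \<le> e) sequentially"
      unfolding eventually_sequentially
    proof (intro exI allI impI)
      fix n assume "N \<le> n"
      then have "N \<le> r n" using seq_suble[OF r, of n] by linarith
      then have "(\<integral>x. (s (r n) x - s k x)\<^sup>2 \<partial>M) < e" using eN k by blast
      then show "integral\<^sup>L M (\<lambda>x. (s (r n) x - s k x)\<^sup>2) \<le> e" by simp
    qed
  qed
  obtain N1 where N1: "\<forall>i\<ge>N1. \<forall>j\<ge>N1. (\<integral>x. (s i x - s j x)\<^sup>2 \<partial>M) < 1"
    using C[of 1] by auto
  have gSQ: "g \<in> SQ M"
  proof -
    have "integrable M (\<lambda>x. (g x - s N1 x)\<^sup>2)" using key[OF N1, of N1] by simp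
    moreover have "(\<lambda>x. g x - s N1 x) \<in> borel_measurable M" by measurable
    ultimately have "(\<lambda>x. g x - s N1 x) \<in> SQ M" by (simp add: SQ_def)
    from SQ_lin[OF this s[of N1], of 1 1] show ?thesis by simp
  qed
  have conv: "(\<lambda>n. \<integral>x. (s n x - g x)\<^sup>2 \<partial>M) \<longlonglongrightarrow> 0"
  proof (rule LIMSEQ_I)
    fix e :: real assume e: "0 < e"
    obtain N where N: "\<forall>i\<ge>N. \<forall>j\<ge>N. (\<integral>x. (s i x - s j x)\<^sup>2 \<partial>M) < e/2"
      using C[of "e/2"] e by auto
    have "norm ((\<integral>x. (s n x - g x)\<^sup>2 \<partial>M) - 0) < e" if n: "n \<ge> N" for n
    proof -
      have "(\<integral>x. (s n x - g x)\<^sup>2 \<partial>M) = (\<integral>x. (g x - s n x)\<^sup>2 \<partial>M)"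
        by (simp add: power2_commute)
      also have "\<dots> \<le> e/2" using key[OF N n] by simp
      finally have "(\<integral>x. (s n x - g x)\<^sup>2 \<partial>M) \<le> e/2" .
      moreover have "0 \<le> (\<integral>x. (s n x - g x)\<^sup>2 \<partial>M)" by simp
      ultimately show ?thesis using e by simp
    qed
    then show "\<exists>no. \<forall>n\<ge>no. norm ((\<integral>x. (s n x - g x)\<^sup>2 \<partial>M) - 0) < e" by blast
  qed
  show ?thesis using gSQ r ae_lim conv by blast
qed

lemma min_exists:
  fixes G :: "('a \<Rightarrow> real) \<Rightarrow> real" and cb :: "'a \<Rightarrow> real" and lam :: real
  assumes lam: "lam > 0" and cb: "cb \<in> SQ M"
    and conv: "\<forall>g\<in>SQ M. \<forall>h\<in>SQ M. \<forall>t::real. 0 \<le> t \<and> t \<le> 1 \<longrightarrow>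
        G (\<lambda>x. t * g x + (1 - t) * h x) \<le> t * G g + (1 - t) * G h"
    and cont: "\<forall>g\<in>SQ M. \<forall>gs. (\<forall>n. gs n \<in> SQ M) \<longrightarrow>
        (\<lambda>n. \<integral>x. (gs n x - g x)\<^sup>2 \<partial>M) \<longlonglongrightarrow> 0 \<longrightarrow> (\<lambda>n. G (gs n)) \<longlonglongrightarrow> G g"
    and J_def: "\<And>h. J h = G h + lam * (\<integral>x. (h x - cb x)\<^sup>2 \<partial>M)"
  shows "\<exists>g\<in>SQ M. (\<forall>h\<in>SQ M. J g \<le> J h) \<and>
           (\<forall>g'\<in>SQ M. (\<forall>h\<in>SQ M. J g' \<le> J h) \<longrightarrow> (AE x in M. g' x = g x))"
proof -
  define Q where "Q h = (\<integral>x. (h x - cb x)\<^sup>2 \<partial>M)" for h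
  have JQ: "\<And>h. J h = G h + lam * Q h" by (simp add: J_def Q_def)
  have Qnn: "\<And>h. 0 \<le> Q h" by (simp add: Q_def)
  have intQ: "\<And>h. h \<in> SQ M \<Longrightarrow> integrable M (\<lambda>x. (h x - cb x)\<^sup>2)"
    using SQ_diff_int cb by blast
  have mid: "J (\<lambda>x. (1/2) * a x + (1 - 1/2) * b x) \<le> (J a + J b) / 2 - lam / 4 * (\<integral>x. (a x - b x)\<^sup>2 \<partial>M)"
    if ab: "a \<in> SQ M" "b \<in> SQ M" for a b
  proof -
    have G: "G (\<lambda>x. (1/2) * a x + (1 - 1/2) * b x) \<le> (1/2) * G a + (1 - 1/2) * G b"
    proof -
      have "0 \<le> (1/2::real) \<and> (1/2::real) \<le> 1" by simp
      then show ?thesis using conv ab by blast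
    qed
    have pw: "((1/2) * a x + (1 - 1/2) * b x - cb x)\<^sup>2
        = (a x - cb x)\<^sup>2 / 2 + (b x - cb x)\<^sup>2 / 2 - (a x - b x)\<^sup>2 / 4" for x
      by (simp add: power2_eq_square field_simps)
    have "Q (\<lambda>x. (1/2) * a x + (1 - 1/2) * b x)
        = (\<integral>x. (a x - cb x)\<^sup>2 / 2 + (b x - cb x)\<^sup>2 / 2 - (a x - b x)\<^sup>2 / 4 \<partial>M)"
      by (simp only: Q_def pw)
    also have "\<dots> = Q a / 2 + Q b / 2 - (\<integral>x. (a x - b x)\<^sup>2 \<partial>M) / 4"
      using intQ[OF ab(1)] intQ[OF ab(2)] SQ_diff_int[OF ab] by (simp add: Q_def)
    finally have "Q (\<lambda>x. (1/2) * a x + (1 - 1/2) * b x) = Q a / 2 + Q b / 2 - (\<integral>x. (a x - b x)\<^sup>2 \<partial>M) / 4" .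
    then have Qm: "lam * Q (\<lambda>x. (1/2) * a x + (1 - 1/2) * b x) = lam * (Q a / 2 + Q b / 2 - (\<integral>x. (a x - b x)\<^sup>2 \<partial>M) / 4)"
      by (rule arg_cong)
    have "J (\<lambda>x. (1/2) * a x + (1 - 1/2) * b x) \<le> ((1/2) * G a + (1 - 1/2) * G b) + lam * (Q a / 2 + Q b / 2 - (\<integral>x. (a x - b x)\<^sup>2 \<partial>M) / 4)"
      unfolding JQ using G Qm by linarith
    also have "\<dots> = (J a + J b) / 2 - lam / 4 * (\<integral>x. (a x - b x)\<^sup>2 \<partial>M)"
      by (simp add: JQ algebra_simps)
    finally show ?thesis .
  qed
  have midSQ: "(\<lambda>x. (1/2) * a x + (1 - 1/2) * b x) \<in> SQ M" if "a \<in> SQ M" "b \<in> SQ M" for a b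
    using SQ_lin[OF that] .
  have "\<exists>r>0. \<forall>h\<in>SQ M. Q h \<le> r \<longrightarrow> G cb - 1 \<le> G h"
  proof (rule ccontr)
    assume "\<not> ?thesis"
    then have "\<forall>n::nat. \<exists>h. h \<in> SQ M \<and> Q h \<le> 1 / real (Suc n) \<and> G h < G cb - 1"
      by (metis not_le of_nat_0_less_iff zero_less_Suc zero_less_divide_1_iff)
    then obtain hs where hs: "\<And>n. hs n \<in> SQ M" "\<And>n. Q (hs n) \<le> 1 / real (Suc n)"
        "\<And>n. G (hs n) < G cb - 1"
      by metis
    have "(\<lambda>n. Q (hs n)) \<longlonglongrightarrow> 0"
    proof (rule real_tendsto_sandwich[where f = "\<lambda>n. 0" and h = "\<lambda>n. 1 / real (Suc n)"])
      show "\<forall>\<^sub>F n in sequentially. 0 \<le> Q (hs n)" by (simp add: Qnn)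
      show "\<forall>\<^sub>F n in sequentially. Q (hs n) \<le> 1 / real (Suc n)" by (intro always_eventually allI hs(2))
      show "(\<lambda>n. 0) \<longlonglongrightarrow> (0::real)" by simp
      show "(\<lambda>n. 1 / real (Suc n)) \<longlonglongrightarrow> 0" using LIMSEQ_inverse_real_of_nat by (simp add: inverse_eq_divide)
    qed
    then have "(\<lambda>n. G (hs n)) \<longlonglongrightarrow> G cb" using cont cb hs(1) by (simp add: Q_def)
    moreover have "\<exists>N. \<forall>n\<ge>N. G (hs n) \<le> G cb - 1" using hs(3) less_imp_le by blast
    ultimately have "G cb \<le> G cb - 1" by (rule LIMSEQ_le_const2)
    then show False by simp
  qed
  then obtain r where r0: "r > 0" and rb: "\<And>h. h \<in> SQ M \<Longrightarrow> Q h \<le> r \<Longrightarrow> G cb - 1 \<le> G h"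
    by blast
  have glob: "G cb - 1 - sqrt (Q h / r) \<le> G h" if h: "h \<in> SQ M" for h
  proof (cases "Q h \<le> r")
    case True
    then show ?thesis using rb[OF h] by (smt (verit) real_sqrt_ge_zero divide_nonneg_pos Qnn r0)
  next
    case False
    then have Qr: "Q h > r" by simp
    define t where "t = sqrt (r / Q h)"
    have t0: "0 < t" using Qr r0 by (simp add: t_def)
    have t1: "t \<le> 1" using Qr r0 by (simp add: t_def)
    have tt: "t\<^sup>2 = r / Q h" using Qr r0 by (simp add: t_def)
    define p where "p = (\<lambda>x. t * h x + (1 - t) * cb x)"
    have pSQ: "p \<in> SQ M" unfolding p_def using SQ_lin[OF h cb] .
    have "Q p = (\<integral>x. t\<^sup>2 * (h x - cb x)\<^sup>2 \<partial>M)"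
      unfolding Q_def p_def by (rule Bochner_Integration.integral_cong) (simp_all add: power2_eq_square algebra_simps)
    also have "\<dots> = t\<^sup>2 * Q h" by (simp add: Q_def)
    also have "\<dots> = r" using tt Qr r0 by simp
    finally have "Q p = r" .
    then have Gp: "G cb - 1 \<le> G p" using rb[OF pSQ] by simp
    have "G p \<le> t * G h + (1 - t) * G cb" using conv h cb t0 t1 unfolding p_def by auto
    with Gp have "t * G cb - 1 \<le> t * G h" by (simp add: algebra_simps)
    then have "G cb - 1 / t \<le> G h" using t0 by (simp add: field_simps)
    moreover have "1 / t = sqrt (Q h / r)" using Qr r0 by (simp add: t_def real_sqrt_divide)
    moreover have "0 \<le> sqrt (Q h / r)" using Qr r0 by simp
    ultimately show ?thesis by linarith
  qed
  define k where "k = 1 / (2 * r * lam)"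
  have k0: "k > 0" using r0 lam by (simp add: k_def)
  have Jlow: "G cb - 1 - k / 2 \<le> J h" if h: "h \<in> SQ M" for h
  proof -
    define y where "y = Q h / r"
    have y0: "0 \<le> y" using Qnn r0 by (simp add: y_def)
    have "0 \<le> (sqrt y - k)\<^sup>2" by simp
    then have "2 * k * sqrt y \<le> y + k\<^sup>2" using y0 by (simp add: power2_eq_square algebra_simps)
    then have "sqrt y \<le> y / (2 * k) + k / 2" using k0 by (simp add: field_simps power2_eq_square)
    also have "y / (2 * k) = lam * Q h" using r0 lam by (simp add: y_def k_def field_simps)
    finally have "sqrt (Q h / r) \<le> lam * Q h + k / 2" by (simp add: y_def)
    then show ?thesis using glob[OF h] by (simp add: JQ)
  qed
  define m where "m = Inf (J ` SQ M)"
  have ne: "J ` SQ M \<noteq> {}" using cb by blast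
  have bdd: "bdd_below (J ` SQ M)" by (rule bdd_belowI2[OF Jlow])
  have mle: "\<And>h. h \<in> SQ M \<Longrightarrow> m \<le> J h" unfolding m_def using bdd by (simp add: cInf_lower)
  have "\<forall>n::nat. \<exists>h. h \<in> SQ M \<and> J h < m + 1 / real (Suc n)"
  proof
    fix n :: nat
    have "m < m + 1 / real (Suc n)" by simp
    then obtain y where "y \<in> J ` SQ M" "y < m + 1 / real (Suc n)"
      using cInf_lessD[OF ne] unfolding m_def by blast
    then show "\<exists>h. h \<in> SQ M \<and> J h < m + 1 / real (Suc n)" by blast
  qed
  then obtain gs where gs: "\<And>n. gs n \<in> SQ M" "\<And>n. J (gs n) < m + 1 / real (Suc n)"
    by metis
  have Jlim: "(\<lambda>n. J (gs n)) \<longlonglongrightarrow> m"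
  proof (rule real_tendsto_sandwich[where f = "\<lambda>n. m" and h = "\<lambda>n. m + 1 / real (Suc n)"])
    show "\<forall>\<^sub>F n in sequentially. m \<le> J (gs n)" using mle gs(1) by (intro always_eventually allI) blast
    show "\<forall>\<^sub>F n in sequentially. J (gs n) \<le> m + 1 / real (Suc n)" using gs(2) less_imp_le by (intro always_eventually allI) blast
    show "(\<lambda>n. m) \<longlonglongrightarrow> m" by simp
    have "(\<lambda>n. 1 / real (Suc n)) \<longlonglongrightarrow> 0" using LIMSEQ_inverse_real_of_nat by (simp add: inverse_eq_divide)
    then show "(\<lambda>n. m + 1 / real (Suc n)) \<longlonglongrightarrow> m" using tendsto_add[of "\<lambda>n. m" m sequentially] by fastforce
  qed
  have dist: "(\<integral>x. (a x - b x)\<^sup>2 \<partial>M) \<le> 2 / lam * (J a + J b - 2 * m)"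
    if ab: "a \<in> SQ M" "b \<in> SQ M" for a b
  proof -
    have "m \<le> (J a + J b) / 2 - lam / 4 * (\<integral>x. (a x - b x)\<^sup>2 \<partial>M)"
      using mle[OF midSQ[OF ab]] mid[OF ab] by linarith
    then show ?thesis using lam by (simp add: field_simps)
  qed
  have Cauchy: "\<exists>N. \<forall>i\<ge>N. \<forall>j\<ge>N. (\<integral>x. (gs i x - gs j x)\<^sup>2 \<partial>M) < e" if e: "e > 0" for e
  proof -
    have "lam * e / 8 > 0" using lam e by simp
    from LIMSEQ_D[OF Jlim this] obtain N where N: "\<And>n. n \<ge> N \<Longrightarrow> norm (J (gs n) - m) < lam * e / 8"
      by blast
    have "(\<integral>x. (gs i x - gs j x)\<^sup>2 \<partial>M) < e" if "i \<ge> N" "j \<ge> N" for i j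
    proof -
      have "J (gs i) - m < lam * e / 8" "J (gs j) - m < lam * e / 8"
        using N[OF that(1)] N[OF that(2)] by (simp_all only: real_norm_def; linarith)+
      then have "2 / lam * (J (gs i) + J (gs j) - 2 * m) < 2 / lam * (lam * e / 4)"
        using lam by (intro mult_strict_left_mono) auto
      also have "\<dots> = e / 2" using lam by simp
      finally show ?thesis using dist[OF gs(1) gs(1), of i j] e by linarith
    qed
    then show ?thesis by blast
  qed
  obtain g \<sigma> where gSQ: "g \<in> SQ M" and \<sigma>: "strict_mono \<sigma>"
    and aelim: "AE x in M. (\<lambda>n. gs (\<sigma> n) x) \<longlonglongrightarrow> g x"
    and L2lim: "(\<lambda>n. \<integral>x. (gs n x - g x)\<^sup>2 \<partial>M) \<longlonglongrightarrow> 0"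
    using SQ_complete[OF gs(1) Cauchy] by blast
  have Glim: "(\<lambda>n. G (gs n)) \<longlonglongrightarrow> G g" using cont gSQ gs(1) L2lim by blast
  define q where "q = (m - G g) / lam"
  have Qlim: "(\<lambda>n. Q (gs n)) \<longlonglongrightarrow> q"
  proof -
    have "(\<lambda>n. (J (gs n) - G (gs n)) / lam) \<longlonglongrightarrow> (m - G g) / lam"
      by (intro tendsto_intros Jlim Glim) (use lam in simp)
    moreover have "\<And>n. (J (gs n) - G (gs n)) / lam = Q (gs n)" using lam by (simp add: JQ)
    ultimately show ?thesis by (simp add: q_def)
  qed
  have Qg: "Q g \<le> q"
  proof (rule field_le_epsilon)
    fix \<epsilon> :: real assume \<epsilon>: "0 < \<epsilon>"
    have "(\<lambda>n. Q (gs (\<sigma> n))) \<longlonglongrightarrow> q"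
      using LIMSEQ_subseq_LIMSEQ[OF Qlim \<sigma>] by (simp add: comp_def)
    then have ev: "eventually (\<lambda>n. Q (gs (\<sigma> n)) < q + \<epsilon>) sequentially"
      by (rule order_tendstoD(2)) (simp add: \<epsilon>)
    have gm[measurable]: "g \<in> borel_measurable M" using gSQ by (simp add: SQ_def)
    have cbm[measurable]: "cb \<in> borel_measurable M" using cb by (simp add: SQ_def)
    have gsm[measurable]: "\<And>n. gs n \<in> borel_measurable M" using gs(1) by (simp add: SQ_def)
    have "integrable M (\<lambda>x. (g x - cb x)\<^sup>2) \<and> integral\<^sup>L M (\<lambda>x. (g x - cb x)\<^sup>2) \<le> q + \<epsilon>"
    proof (rule fatou_real[where f = "\<lambda>n x. (gs (\<sigma> n) x - cb x)\<^sup>2"])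
      show "\<And>n. (\<lambda>x. (gs (\<sigma> n) x - cb x)\<^sup>2) \<in> borel_measurable M" by measurable
      show "(\<lambda>x. (g x - cb x)\<^sup>2) \<in> borel_measurable M" by measurable
      show "\<And>n x. 0 \<le> (gs (\<sigma> n) x - cb x)\<^sup>2" by simp
      show "AE x in M. (\<lambda>n. (gs (\<sigma> n) x - cb x)\<^sup>2) \<longlonglongrightarrow> (g x - cb x)\<^sup>2"
        using aelim
      proof eventually_elim
        case (elim x)
        then show ?case by (intro tendsto_intros)
      qed
      show "\<And>n. integrable M (\<lambda>x. (gs (\<sigma> n) x - cb x)\<^sup>2)" using intQ gs(1) by blast
      show "eventually (\<lambda>n. integral\<^sup>L M (\<lambda>x. (gs (\<sigma> n) x - cb x)\<^sup>2) \<le> q + \<epsilon>) sequentially"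
        using ev by (rule eventually_mono) (simp add: Q_def)
    qed
    then show "Q g \<le> q + \<epsilon>" by (simp add: Q_def)
  qed
  have Jg: "J g \<le> m" using Qg lam by (simp add: JQ q_def field_simps)
  have minimal: "\<forall>h\<in>SQ M. J g \<le> J h" using Jg mle by (meson order_trans)
  have unique: "AE x in M. g' x = g x" if g': "g' \<in> SQ M" and mg': "\<forall>h\<in>SQ M. J g' \<le> J h" for g'
  proof -
    have e1: "J g' \<le> J g" using mg' gSQ by blast
    have e2: "J g \<le> J g'" using minimal g' by blast
    have h0: "J g \<le> J (\<lambda>x. (1/2) * g' x + (1 - 1/2) * g x)" using minimal midSQ[OF g' gSQ] by blast
    have h1: "J g \<le> (J g' + J g) / 2 - lam / 4 * (\<integral>x. (g' x - g x)\<^sup>2 \<partial>M)"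
      by (rule order_trans[OF h0 mid[OF g' gSQ]])
    have h2: "(J g' + J g) / 2 \<le> J g" using e1 by simp
    from h1 h2 have "lam / 4 * (\<integral>x. (g' x - g x)\<^sup>2 \<partial>M) \<le> 0" by linarith
    then have "(\<integral>x. (g' x - g x)\<^sup>2 \<partial>M) \<le> 0" using lam by (simp add: mult_le_0_iff)
    moreover have "0 \<le> (\<integral>x. (g' x - g x)\<^sup>2 \<partial>M)" by simp
    ultimately have "(\<integral>x. (g' x - g x)\<^sup>2 \<partial>M) = 0" by linarith
    then have "AE x in M. (g' x - g x)\<^sup>2 = 0"
      using integral_nonneg_eq_0_iff_AE[OF SQ_diff_int[OF g' gSQ]] by simp
    then show ?thesis by eventually_elim simp
  qed
  show ?thesis using gSQ minimal unique by blast
qed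


end

lemma pick_one:
  fixes u :: "nat \<Rightarrow> 'b \<Rightarrow> real"
  assumes a01: "\<forall>i\<in>{1..K}. u i x \<in> {0, 1}" and s1: "(\<Sum>i=1..K. u i x) = 1"
  shows "\<exists>j\<in>{1..K}. \<forall>w::nat \<Rightarrow> real. (\<Sum>i=1..K. w i * u i x) = w j"
proof -
  have "\<exists>j\<in>{1..K}. u j x \<noteq> 0"
  proof (rule ccontr)
    assume "\<not> ?thesis"
    then have "(\<Sum>i=1..K. u i x) = 0" by simp
    with s1 show False by simp
  qed
  then obtain j where j: "j \<in> {1..K}" "u j x \<noteq> 0" by blast
  then have uj: "u j x = 1" using a01 by auto
  have "(\<Sum>i=1..K. u i x) = u j x + (\<Sum>i\<in>{1..K} - {j}. u i x)"
    using j(1) by (simp add: sum.remove)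
  then have "(\<Sum>i\<in>{1..K} - {j}. u i x) = 0" using s1 uj by simp
  moreover have "\<forall>i\<in>{1..K} - {j}. 0 \<le> u i x" using a01 by auto
  ultimately have z: "\<forall>i\<in>{1..K} - {j}. u i x = 0"
    using sum_nonneg_eq_0_iff[of "{1..K} - {j}" "\<lambda>i. u i x"] by simp
  have "(\<Sum>i=1..K. w i * u i x) = w j" for w :: "nat \<Rightarrow> real"
  proof -
    have "(\<Sum>i=1..K. w i * u i x) = w j * u j x + (\<Sum>i\<in>{1..K} - {j}. w i * u i x)"
      using j(1) by (simp add: sum.remove)
    also have "(\<Sum>i\<in>{1..K} - {j}. w i * u i x) = 0" using z by simp
    finally show ?thesis using uj by simp
  qed
  with j(1) show ?thesis by blast
qed

lemma TV_nonneg: "0 \<le> TV \<Omega> v"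
proof -
  have mem: "((\<lambda>x. 0::R2), (\<lambda>x v. 0::R2)) \<in> test_fields \<Omega>"
    unfolding test_fields_def
    by (auto intro!: exI[of _ "{}"] has_derivative_const continuous_on_const)
  have "ereal (\<integral>x. v x * div_field (snd ((\<lambda>x. 0::R2), (\<lambda>x v. 0::R2))) x \<partial>lebesgue_on \<Omega>) \<le> TV \<Omega> v"
    unfolding TV_def
    using SUP_upper[OF mem, of "\<lambda>p. ereal (\<integral>x. v x * div_field (snd p) x \<partial>lebesgue_on \<Omega>)"] by simp
  moreover have "div_field (\<lambda>x v. 0::R2) x = 0" for x by (simp add: div_field_def)
  ultimately show ?thesis by (simp add: zero_ereal_def)
qed

theorem theorem1:
  fixes \<Omega> :: "R2 set" and f :: "R2 \<Rightarrow> real"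
    and A :: "(R2 \<Rightarrow> real) \<Rightarrow> (R2 \<Rightarrow> real)"
    and \<Phi> :: "(R2 \<Rightarrow> real) \<Rightarrow> (R2 \<Rightarrow> real) \<Rightarrow> real"
    and \<mu> lam :: real and K :: nat
    and u :: "nat \<Rightarrow> R2 \<Rightarrow> real" and c :: "nat \<Rightarrow> real"
  assumes "bounded \<Omega>" and "open \<Omega>" and "connected \<Omega>"
    and "\<forall>x\<in>\<Omega>. f x \<in> {0..1}"
    and "linear_on_L2 \<Omega> A"
    and "\<mu> > 0" and "lam > 0" and "K \<ge> 1"
    and "\<forall>x\<in>\<Omega>. (\<Sum>i=1..K. u i x) = 1"
    and "\<forall>x\<in>\<Omega>. \<forall>i\<in>{1..K}. u i x \<in> {0, 1}"
    and "\<forall>i\<in>{1..K}. u i \<in> borel_measurable (lebesgue_on \<Omega>)"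
    and "\<forall>i\<in>{1..K}. TV \<Omega> (u i) < \<infinity>"
    and "convex_on_L2 \<Omega> (\<lambda>g. \<Phi> f (A g))"
    and "continuous_on_L2 \<Omega> (\<lambda>g. \<Phi> f (A g))"
  shows "\<exists>g\<in>L2 \<Omega>.
           (\<forall>h\<in>L2 \<Omega>. energy \<Omega> \<mu> lam K \<Phi> f A u c g \<le> energy \<Omega> \<mu> lam K \<Phi> f A u c h) \<and>
           (\<forall>g'\<in>L2 \<Omega>. (\<forall>h\<in>L2 \<Omega>. energy \<Omega> \<mu> lam K \<Phi> f A u c g' \<le> energy \<Omega> \<mu> lam K \<Phi> f A u c h)
              \<longrightarrow> (AE x in lebesgue_on \<Omega>. g' x = g x))"
proof -
  note bnd = assms(1) and opn = assms(2) and mu0 = assms(6) and lam0 = assms(7)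
    and sum1 = assms(9) and u01 = assms(10) and um = assms(11) and TVfin = assms(12)
    and cvx = assms(13) and cnt = assms(14)
  let ?M = "lebesgue_on \<Omega>"
  have fm: "finite_measure ?M"
    by (rule finite_measure_lebesgue_on) (rule lmeasurable_open[OF bnd opn])
  have L2eq: "L2 \<Omega> = SQ ?M" by (simp add: L2_def SQ_def)
  define cb where "cb x = (\<Sum>i=1..K. c i * u i x)" for x
  have pick: "\<exists>j\<in>{1..K}. \<forall>w::nat \<Rightarrow> real. (\<Sum>i=1..K. w i * u i x) = w j" if "x \<in> \<Omega>" for x
    using pick_one[of K u x] u01 sum1 that by blast
  have cbm[measurable]: "cb \<in> borel_measurable ?M"
    unfolding cb_def
  proof (rule borel_measurable_sum)
    fix i assume "i \<in> {1..K}"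
    then have [measurable]: "u i \<in> borel_measurable ?M" using um by blast
    show "(\<lambda>x. c i * u i x) \<in> borel_measurable ?M" by measurable
  qed
  have cbsq: "(cb x)\<^sup>2 = (\<Sum>i=1..K. (c i)\<^sup>2 * u i x)" if xO: "x \<in> \<Omega>" for x
  proof -
    obtain j where "\<forall>w::nat \<Rightarrow> real. (\<Sum>i=1..K. w i * u i x) = w j" using pick[OF xO] by blast
    then show ?thesis unfolding cb_def by simp
  qed
  have cbSQ: "cb \<in> SQ ?M"
  proof -
    have "integrable ?M (\<lambda>x. \<Sum>i=1..K. (c i)\<^sup>2 * u i x)"
    proof (rule Bochner_Integration.integrable_sum)
      fix i assume i: "i \<in> {1..K}"
      have [measurable]: "u i \<in> borel_measurable ?M" using um i by blast
      show "integrable ?M (\<lambda>x. (c i)\<^sup>2 * u i x)"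
      proof (rule Bochner_Integration.integrable_bound[of _ "\<lambda>x. (c i)\<^sup>2"])
        show "integrable ?M (\<lambda>x. (c i)\<^sup>2)" using finite_measure.integrable_const[OF fm] by blast
        show "(\<lambda>x. (c i)\<^sup>2 * u i x) \<in> borel_measurable ?M" by measurable
        show "AE x in ?M. norm ((c i)\<^sup>2 * u i x) \<le> norm ((c i)\<^sup>2)"
        proof (rule AE_I2)
          fix x assume "x \<in> space ?M"
          then have "u i x = 0 \<or> u i x = 1" using u01 i by simp
          then show "norm ((c i)\<^sup>2 * u i x) \<le> norm ((c i)\<^sup>2)" by auto
        qed
      qed
    qed
    moreover have "integrable ?M (\<lambda>x. (cb x)\<^sup>2) = integrable ?M (\<lambda>x. \<Sum>i=1..K. (c i)\<^sup>2 * u i x)"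
      by (rule Bochner_Integration.integrable_cong) (simp_all add: cbsq)
    ultimately have "integrable ?M (\<lambda>x. (cb x)\<^sup>2)" by simp
    then show ?thesis using cbm by (simp add: SQ_def)
  qed
  define G where "G g = \<mu> * \<Phi> f (A g)" for g
  define J where "J h = G h + lam * (\<integral>x. (h x - cb x)\<^sup>2 \<partial>?M)" for h
  have convG: "\<forall>g\<in>SQ ?M. \<forall>h\<in>SQ ?M. \<forall>t::real. 0 \<le> t \<and> t \<le> 1 \<longrightarrow>
        G (\<lambda>x. t * g x + (1 - t) * h x) \<le> t * G g + (1 - t) * G h"
  proof (intro ballI allI impI)
    fix g h and t :: real assume g: "g \<in> SQ ?M" and h: "h \<in> SQ ?M" and t: "0 \<le> t \<and> t \<le> 1"
    have "\<Phi> f (A (\<lambda>x. t * g x + (1 - t) * h x)) \<le> t * \<Phi> f (A g) + (1 - t) * \<Phi> f (A h)"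
      using cvx g h t unfolding convex_on_L2_def L2eq by blast
    then have "\<mu> * \<Phi> f (A (\<lambda>x. t * g x + (1 - t) * h x)) \<le> \<mu> * (t * \<Phi> f (A g) + (1 - t) * \<Phi> f (A h))"
      using mu0 by (intro mult_left_mono) auto
    then show "G (\<lambda>x. t * g x + (1 - t) * h x) \<le> t * G g + (1 - t) * G h"
      by (simp add: G_def algebra_simps)
  qed
  have contG: "\<forall>g\<in>SQ ?M. \<forall>gs. (\<forall>n. gs n \<in> SQ ?M) \<longrightarrow>
        (\<lambda>n. \<integral>x. (gs n x - g x)\<^sup>2 \<partial>?M) \<longlonglongrightarrow> 0 \<longrightarrow> (\<lambda>n. G (gs n)) \<longlonglongrightarrow> G g"
  proof (intro ballI allI impI)
    fix g gs assume g: "g \<in> SQ ?M" and gs: "\<forall>n. gs n \<in> SQ ?M"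
      and l: "(\<lambda>n. \<integral>x. (gs n x - g x)\<^sup>2 \<partial>?M) \<longlonglongrightarrow> 0"
    have "(\<lambda>n. \<Phi> f (A (gs n))) \<longlonglongrightarrow> \<Phi> f (A g)"
      using cnt g gs l unfolding continuous_on_L2_def L2eq L2_dist_sq_def by blast
    then show "(\<lambda>n. G (gs n)) \<longlonglongrightarrow> G g" unfolding G_def by (rule tendsto_mult_left)
  qed
  obtain g where gSQ: "g \<in> SQ ?M" and gmin: "\<forall>h\<in>SQ ?M. J g \<le> J h"
    and guniq: "\<forall>g'\<in>SQ ?M. (\<forall>h\<in>SQ ?M. J g' \<le> J h) \<longrightarrow> (AE x in ?M. g' x = g x)"
    using finite_measure.min_exists[OF fm lam0 cbSQ convG contG, of J] by (auto simp: J_def)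
  define T where "T = (\<Sum>i=1..K. TV \<Omega> (u i))"
  have T0: "0 \<le> T" unfolding T_def by (rule sum_nonneg) (simp add: TV_nonneg)
  have Tfin: "T \<noteq> \<infinity>" unfolding T_def sum_Pinfty using TVfin by auto
  obtain t where Tt: "T = ereal t" using T0 Tfin by (cases T) auto
  have fid: "(\<Sum>i=1..K. \<integral>x. (h x - c i)\<^sup>2 * u i x \<partial>?M) = (\<integral>x. (h x - cb x)\<^sup>2 \<partial>?M)"
    if h: "h \<in> SQ ?M" for h
  proof -
    have hm[measurable]: "h \<in> borel_measurable ?M" using h by (simp add: SQ_def)
    have int: "integrable ?M (\<lambda>x. (h x - c i)\<^sup>2 * u i x)" if i: "i \<in> {1..K}" for i
    proof (rule Bochner_Integration.integrable_bound[of _ "\<lambda>x. (h x - c i)\<^sup>2"])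
      have [measurable]: "u i \<in> borel_measurable ?M" using um i by blast
      show "integrable ?M (\<lambda>x. (h x - c i)\<^sup>2)"
        using finite_measure.SQ_diff_int[OF fm h finite_measure.SQ_const[OF fm]] by simp
      show "(\<lambda>x. (h x - c i)\<^sup>2 * u i x) \<in> borel_measurable ?M" by measurable
      show "AE x in ?M. norm ((h x - c i)\<^sup>2 * u i x) \<le> norm ((h x - c i)\<^sup>2)"
      proof (rule AE_I2)
        fix x assume "x \<in> space ?M"
        then have "u i x = 0 \<or> u i x = 1" using u01 i by simp
        then show "norm ((h x - c i)\<^sup>2 * u i x) \<le> norm ((h x - c i)\<^sup>2)" by auto
      qed
    qed
    have "(\<Sum>i=1..K. \<integral>x. (h x - c i)\<^sup>2 * u i x \<partial>?M) = (\<integral>x. (\<Sum>i=1..K. (h x - c i)\<^sup>2 * u i x) \<partial>?M)"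
      by (rule Bochner_Integration.integral_sum[symmetric]) (rule int)
    also have "\<dots> = (\<integral>x. (h x - cb x)\<^sup>2 \<partial>?M)"
    proof (rule Bochner_Integration.integral_cong)
      fix x assume "x \<in> space ?M"
      then have "x \<in> \<Omega>" by simp
      then obtain j where "\<forall>w::nat \<Rightarrow> real. (\<Sum>i=1..K. w i * u i x) = w j" using pick by blast
      then show "(\<Sum>i=1..K. (h x - c i)\<^sup>2 * u i x) = (h x - cb x)\<^sup>2"
        unfolding cb_def by simp
    qed simp
    finally show ?thesis .
  qed
  have En: "energy \<Omega> \<mu> lam K \<Phi> f A u c h = ereal (J h + t)" if "h \<in> SQ ?M" for h
    unfolding energy_def J_def G_def using fid[OF that] Tt by (simp add: T_def)
  show ?thesis unfolding L2eq
  proof (intro bexI[OF _ gSQ] conjI ballI impI)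
    fix h assume h: "h \<in> SQ ?M"
    show "energy \<Omega> \<mu> lam K \<Phi> f A u c g \<le> energy \<Omega> \<mu> lam K \<Phi> f A u c h"
      using gmin h by (simp add: En[OF gSQ] En[OF h])
  next
    fix g' assume g': "g' \<in> SQ ?M"
      and m': "\<forall>h\<in>SQ ?M. energy \<Omega> \<mu> lam K \<Phi> f A u c g' \<le> energy \<Omega> \<mu> lam K \<Phi> f A u c h"
    have "\<forall>h\<in>SQ ?M. J g' \<le> J h"
    proof
      fix h assume h: "h \<in> SQ ?M"
      from m' h have "energy \<Omega> \<mu> lam K \<Phi> f A u c g' \<le> energy \<Omega> \<mu> lam K \<Phi> f A u c h" by blast
      then show "J g' \<le> J h" by (simp add: En[OF g'] En[OF h])
    qed
    then show "AE x in ?M. g' x = g x" using guniq g' by blast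
  qed
qed

end
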